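(* For every integer $n\ge 0$, $$\sum_{k=0}^{2n}(-1)^k\binom{2n}{k}C_kC_{2n-k}=C_n\binom{2n}{n},$$ and $$\sum_{k=0}^{2n+1}(-1)^k\binom{2n+1}{k}C_kC_{2n+1-k}=0.$$
   Context: $C_k=\binom{2k}{k}\frac{1}{k+1}$ denotes the $k$-th Catalan number. *)

theory Defs
  imports Main
begin

text \<open>The k-th Catalan number C_k = binom(2k,k)/(k+1); the division is exact.\<close>
definition catalan :: "nat \<Rightarrow> nat" where
  "catalan k = ((2*k) choose k) div (k + 1)"

end

theory Submission imports Defs Complex_Main begin

lemma choose_shift: "(k+1) * (n choose (k+1)) = (n-k) * (n choose k)"
  using binomial_absorb_comp times_binomial_minus1_eq by fastforce

lemma cat_mult: "catalan k * (k+1) = (2*k choose k)"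
proof -
  define a where "a = (2*k choose k)"
  define b where "b = (2*k choose (k+1))"
  have h: "(k+1) * b = k * a" using choose_shift[of k "2*k"] by (simp add: a_def b_def)
  have "b \<le> a"
  proof -
    have "Suc k*b \<le> Suc k*a" using h by simp
    then show ?thesis by (metis Suc_mult_le_cancel1)
  qed
  have "(k+1) * (a - b) = a" using h \<open>b \<le> a\<close> by (simp add: diff_mult_distrib2 algebra_simps)
  then have "(k+1) dvd a" by (metis dvd_triv_left)
  then show ?thesis unfolding catalan_def a_def[symmetric] by (metis dvd_div_mult_self)
qed

definition Cr :: "nat \<Rightarrow> real" where "Cr k = real (catalan k)"

lemma Cr_eq: "Cr k = real (2*k choose k) / (real k + 1)"
proof -
  define c where "c = catalan k"
  define a where "a = 2*k choose k"
  have "c * (k+1) = a" using cat_mult[of k] by (simp add: a_def c_def)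
  then have "real (c * (k+1)) = real a" by simp
  then have "real c * (real k + 1) = real a" by (simp add: algebra_simps)
  then show ?thesis unfolding Cr_def c_def[symmetric] a_def[symmetric] by (simp add: field_simps)
qed

lemma central_nat: "(k+1) * ((2*(k+1)) choose (k+1)) = 2*(2*k+1) * ((2*k) choose k)"
proof -
  have e1: "(2*(k+1)) choose (k+1) = (2*k+1 choose k) + (2*k+1 choose (k+1))"
    by (simp add: numeral_2_eq_2)
  have e2: "(2*k+1 choose k) = (2*k+1 choose (k+1))"
    using binomial_symmetric[of k "2*k+1"] by simp
  have e3: "(k+1) * (2*k+1 choose (k+1)) = (2*k+1) * (2*k choose k)"
    using Suc_times_binomial[of k "2*k"] by simp
  show ?thesis using e1 e2 e3 by (simp add: algebra_simps)
qed

lemma Cr_rec: "Cr (k+1) * (real k + 2) = 2*(2*real k+1) * Cr k"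
proof -
  define A where "A = (2*(k+1)) choose (k+1)"
  define B where "B = (2*k) choose k"
  have "(k+1) * A = 2*(2*k+1) * B" using central_nat[of k] by (simp add: A_def B_def)
  then have "real ((k+1) * A) = real (2*(2*k+1) * B)" by simp
  then have c: "(real k+1) * real A = 2*(2*real k+1) * real B" by (simp add: algebra_simps)
  have "Cr (k+1) = real A / (real k + 2)" unfolding Cr_eq A_def by simp
  moreover have "Cr k = real B / (real k + 1)" unfolding Cr_eq B_def by simp
  moreover have "real A = 2*(2*real k+1)*real B/(real k+1)" using c by (simp add: field_simps)
  ultimately show ?thesis by simp
qed

lemma b1: "real ((j+k+2) choose k) * ((real j+1)*(real j+2)) = real ((j+k) choose k)*((real j+real k+1)*(real j+real k+2))"
proof -
  define X where "X = (j+k+2) choose k"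
  define Y where "Y = (j+k+1) choose k"
  define Z where "Z = (j+k) choose k"
  have a1: "(j+1)*Y = (j+k+1)*Z"
    using binomial_absorb_comp[of "j+k+1" k] by (simp add: Y_def Z_def)
  have a2: "(j+2)*X = (j+k+2)*Y"
    using binomial_absorb_comp[of "j+k+2" k] by (simp add: X_def Y_def)
  have "(j+1)*(j+2)*X = Z*(j+k+1)*(j+k+2)"
    by (metis a1 a2 mult.assoc mult.commute)
  then have "real ((j+1)*(j+2)*X) = real (Z*(j+k+1)*(j+k+2))" by simp
  then show ?thesis unfolding X_def[symmetric] Z_def[symmetric] by (simp add: algebra_simps)
qed

lemma b2: "real ((j+k+2) choose (k+1)) * ((real k+1)*(real j+1)) = real ((j+k) choose k)*((real j+real k+1)*(real j+real k+2))"
proof -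
  define X where "X = (j+k+2) choose (k+1)"
  define Y where "Y = (j+k+1) choose k"
  define Z where "Z = (j+k) choose k"
  have a1: "(j+1)*Y = (j+k+1)*Z"
    using binomial_absorb_comp[of "j+k+1" k] by (simp add: Y_def Z_def)
  have a2: "(k+1)*X = (j+k+2)*Y"
    using Suc_times_binomial[of k "j+k+1"] by (simp add: X_def Y_def)
  have "(k+1)*(j+1)*X = Z*(j+k+1)*(j+k+2)"
    by (metis a1 a2 mult.assoc mult.commute)
  then have "real ((k+1)*(j+1)*X) = real (Z*(j+k+1)*(j+k+2))" by simp
  then show ?thesis unfolding X_def[symmetric] Z_def[symmetric] by (simp add: algebra_simps)
qed

definition PP :: "real \<Rightarrow> real \<Rightarrow> real" where
  "PP m k = -48+152*k-120*k^2+16*k^3-176*m+488*m*k-288*m*k^2+32*m*k^3-212*m^2+528*m^2*k-216*m^2*k^2+16*m^2*k^3-100*m^3+224*m^3*k-48*m^3*k^2-16*m^4+32*m^4*k"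

lemma core:
  fixes j k m :: real
  assumes m: "m = j+k"
  shows "4*(m+1)*(m+2)^2*(m+4)*(2*j+1)*(2*j+3)*(m+3)*(2*k-1) - 16*(m+1)^2*(j+1)*(j+2)^2*(j+3)*(m+3)*(2*k-1) = PP m (k+1)*(j+2)*(j+3)*(2*k-1) + (2*j+1)*k*(k+1)*PP m k"
  unfolding PP_def m by algebra

lemma alg:
  fixes j k m s b0 ck cj X Y Fm R0 R1 :: real
  assumes j: "j \<ge> 0" and k: "k \<ge> 0" and k1: "2*k-1 \<noteq> 0" and m: "m = j+k"
  and X: "X = s*b0*((m+1)*(m+2)/((j+1)*(j+2))) * ck * (cj*(4*(2*j+1)*(2*j+3)/((j+2)*(j+3))))"
  and Fm: "Fm = s*b0*ck*cj"
  and Y: "Y = -s*b0*((m+1)*(m+2)/((k+1)*(j+1))) * (ck*(2*(2*k+1))/(k+2)) * (cj*(2*(2*j+1))/(j+2))"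
  and R0: "R0 = - k*(k+1)*PP m k/(4*(m+1)*(m+2)*(m+3)*(2*k-1)*(2*(m+2-k)-1))"
  and R1: "R1 = - (k+1)*(k+1+1)*PP m (k+1)/(4*(m+1)*(m+2)*(m+3)*(2*(k+1)-1)*(2*(m+2-(k+1))-1))"
  shows "(m+2)*(m+4)*X - 16*(m+1)^2*Fm = Y*R1 - X*R0"
proof -
  define P0 where "P0 = PP m k"
  define P1 where "P1 = PP m (k+1)"
  define Q where "Q = s*b0*ck*cj"
  define A1 where "A1 = j+1"
  define A2 where "A2 = j+2"
  define A3 where "A3 = j+3"
  define M1 where "M1 = m+1"
  define M2 where "M2 = m+2"
  define M3 where "M3 = m+3"
  define M4 where "M4 = m+4"
  define K1 where "K1 = k+1"
  define K2 where "K2 = k+2"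
  define E where "E = 2*k+1"
  define D where "D = 2*k-1"
  define J where "J = 2*j+1"
  define J3 where "J3 = 2*j+3"
  have nz: "A1 \<noteq> 0" "A2 \<noteq> 0" "A3 \<noteq> 0" "M1 \<noteq> 0" "M2 \<noteq> 0" "M3 \<noteq> 0" "K1 \<noteq> 0" "K2 \<noteq> 0" "E \<noteq> 0" "J \<noteq> 0" "J3 \<noteq> 0" "D \<noteq> 0"
    using j k m k1 unfolding A1_def A2_def A3_def M1_def M2_def M3_def K1_def K2_def E_def J_def J3_def D_def by auto
  have c: "4*M1*M2^2*M4*J*J3*M3*D - 16*M1^2*A1*A2^2*A3*M3*D = P1*A2*A3*D + J*k*K1*P0"
    using core[OF m] unfolding P0_def P1_def A1_def A2_def A3_def M1_def M2_def M3_def M4_def K1_def J_def J3_def D_def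
    by (simp add: algebra_simps)
  have xx: "X = Q*(M1*M2/(A1*A2))*(4*J*J3/(A2*A3))"
    unfolding X Q_def A1_def A2_def A3_def M1_def M2_def J_def J3_def by (simp add: mult_ac)
  have fm: "Fm = Q" unfolding Fm Q_def ..
  have yy: "Y = -Q*(M1*M2/(K1*A1)) * (2*E/K2) * (2*J/A2)"
    unfolding Y Q_def A1_def A2_def M1_def M2_def K1_def K2_def E_def J_def by (simp add: mult_ac)
  have r1: "R1 = - K1*K2*P1/(4*M1*M2*M3*E*J)"
    unfolding R1 P1_def K1_def K2_def M1_def M2_def M3_def E_def J_def using m by (simp add: algebra_simps)
  have r0: "R0 = - k*K1*P0/(4*M1*M2*M3*D*J3)"
    unfolding R0 P0_def K1_def M1_def M2_def M3_def D_def J3_def using m by (simp add: algebra_simps)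
  have yr: "Y*R1 = Q*(P1/(A1*A2*M3))" unfolding yy r1 using nz by (simp add: field_simps)
  have xr: "X*R0 = - Q*(J*k*K1*P0/(A1*A2^2*A3*M3*D))" unfolding xx r0 using nz by (simp add: field_simps power2_eq_square)
  have xx2: "X = Q*(4*M1*M2*J*J3/(A1*A2^2*A3))" unfolding xx using nz by (simp add: field_simps power2_eq_square)
  have l: "M2*M4*(4*M1*M2*J*J3/(A1*A2^2*A3)) - 16*M1^2 = (4*M1*M2^2*M4*J*J3*M3*D - 16*M1^2*A1*A2^2*A3*M3*D)/(A1*A2^2*A3*M3*D)"
    using nz by (simp add: field_simps power2_eq_square)
  have r: "P1/(A1*A2*M3) + J*k*K1*P0/(A1*A2^2*A3*M3*D) = (P1*A2*A3*D + J*k*K1*P0)/(A1*A2^2*A3*M3*D)"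
    using nz by (simp add: field_simps power2_eq_square)
  have br: "M2*M4*(4*M1*M2*J*J3/(A1*A2^2*A3)) - 16*M1^2 = P1/(A1*A2*M3) + J*k*K1*P0/(A1*A2^2*A3*M3*D)"
    unfolding l r c ..
  have "(m+2)*(m+4)*X - 16*(m+1)^2*Fm = Q*(M2*M4*(4*M1*M2*J*J3/(A1*A2^2*A3)) - 16*M1^2)"
    unfolding xx2 fm M1_def M2_def M4_def by (simp add: algebra_simps)
  also have "\<dots> = Q*(P1/(A1*A2*M3) + J*k*K1*P0/(A1*A2^2*A3*M3*D))"
    using br by simp
  also have "\<dots> = Y*R1 - X*R0" unfolding yr xr by (simp add: algebra_simps)
  finally show ?thesis .
qed

lemma Cr0: "Cr 0 = 1" by (simp add: Cr_def catalan_def)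
lemma Cr1: "Cr 1 = 1" using cat_mult[of 1] by (simp add: Cr_def)

lemma divide_helper: "(x::real) * d = y \<Longrightarrow> d \<noteq> 0 \<Longrightarrow> x = y / d"
  by (simp add: eq_divide_eq)

lemma Cr_Suc: "Cr (j+1) = Cr j*(2*(2*real j+1))/(real j+2)"
  using Cr_rec[of j] by (simp add: field_simps)

lemma Cr_Suc2: "Cr (j+2) = Cr j*(4*(2*real j+1)*(2*real j+3)/((real j+2)*(real j+3)))"
proof -
  have "Cr (j+2) = Cr (j+1)*(2*(2*real (j+1)+1))/(real (j+1)+2)" using Cr_Suc[of "j+1"] by simp
  also have "\<dots> = Cr j*(4*(2*real j+1)*(2*real j+3)/((real j+2)*(real j+3)))"
    unfolding Cr_Suc by (simp add: field_simps)
  finally show ?thesis .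
qed

definition F :: "nat \<Rightarrow> nat \<Rightarrow> real" where
  "F m k = (-1)^k * real (m choose k) * Cr k * Cr (m - k)"

definition R :: "nat \<Rightarrow> nat \<Rightarrow> real" where
  "R m k = - real k*(real k+1)*PP (real m) (real k)/(4*(real m+1)*(real m+2)*(real m+3)*(2*real k-1)*(2*(real m+2-real k)-1))"

definition G :: "nat \<Rightarrow> nat \<Rightarrow> real" where
  "G m k = F (m+2) k * R m k"

lemma F_zero: "m < k \<Longrightarrow> F m k = 0" by (simp add: F_def)

lemma PP_b1: "PP m (m+1) = 4*m*(m+1)*(m+4)*(2*m+1)"
  unfolding PP_def by algebra
lemma PP_b2: "PP m (m+2) = -4*(m+1)*(m+2)*(m+4)*(2*m+3)"
  unfolding PP_def by algebra

lemma Rb1_alg: fixes x::real assumes "x \<ge> 0"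
  shows "- (x+1)*(x+1+1)*(4*x*(x+1)*(x+4)*(2*x+1))/(4*(x+1)*(x+2)*(x+3)*(2*(x+1)-1)*(2*(x+2-(x+1))-1)) = - x*(x+1)*(x+4)/(x+3)"
proof -
  have d1: "4*(x+1)*(x+2)*(x+3)*(2*(x+1)-1)*(2*(x+2-(x+1))-1) \<noteq> 0" using assms by auto
  have d2: "x+3 \<noteq> 0" using assms by auto
  show ?thesis by (subst frac_eq_eq[OF d1 d2]) (simp add: algebra_simps)
qed

lemma Rb2_alg: fixes x::real assumes "x \<ge> 0"
  shows "- (x+2)*(x+2+1)*(-4*(x+1)*(x+2)*(x+4)*(2*x+3))/(4*(x+1)*(x+2)*(x+3)*(2*(x+2)-1)*(2*(x+2-(x+2))-1)) = - (x+2)*(x+4)"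
proof -
  have d1: "4*(x+1)*(x+2)*(x+3)*(2*(x+2)-1)*(2*(x+2-(x+2))-1) \<noteq> 0" using assms by auto
  show ?thesis by (subst divide_eq_eq, simp only: if_P[OF d1]) (simp add: algebra_simps)
qed

lemma bnd_alg: fixes x y s c :: real assumes y: "y = x+3" and "y \<noteq> 0"
  shows "(-s*(c*(2*(2*x+3))/y))*(-(x+2)*(x+4)) - (s*(x+2)*c)*(-x*(x+1)*(x+4)/y) = (x+2)*(x+4)*(s*(x+2)*c)"
proof -
  have "(-s*(c*(2*(2*x+3))/y))*(-(x+2)*(x+4)) - (s*(x+2)*c)*(-x*(x+1)*(x+4)/y) = (s*c*(2*(2*x+3))*(x+2)*(x+4) + s*(x+2)*c*x*(x+1)*(x+4))/y"
    using assms(2) by (simp add: field_simps)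
  also have "\<dots> = ((x+2)*(x+4)*(s*(x+2)*c))*y/y" unfolding y by (simp add: algebra_simps)
  also have "\<dots> = (x+2)*(x+4)*(s*(x+2)*c)" using assms(2) by simp
  finally show ?thesis .
qed

lemma R_b1: "R m (m+1) = - real m*(real m+1)*(real m+4)/(real m+3)"
proof -
  have "R m (m+1) = - (real m+1)*(real m+1+1)*PP (real m) (real m+1)/(4*(real m+1)*(real m+2)*(real m+3)*(2*(real m+1)-1)*(2*(real m+2-(real m+1))-1))"
    unfolding R_def by (simp add: ac_simps)
  also have "\<dots> = - real m*(real m+1)*(real m+4)/(real m+3)"
    unfolding PP_b1 by (rule Rb1_alg) simp
  finally show ?thesis .
qed
lemma R_b2: "R m (m+2) = - (real m+2)*(real m+4)"
proof -
  have "R m (m+2) = - (real m+2)*(real m+2+1)*PP (real m) (real m+2)/(4*(real m+1)*(real m+2)*(real m+3)*(2*(real m+2)-1)*(2*(real m+2-(real m+2))-1))"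
    unfolding R_def by (simp add: ac_simps)
  also have "\<dots> = - (real m+2)*(real m+4)"
    unfolding PP_b2 by (rule Rb2_alg) simp
  finally show ?thesis .
qed

lemma tele:
  assumes "k \<le> m+2"
  shows "(real m+2)*(real m+4)*F (m+2) k - 16*(real m+1)^2*F m k = G m (k+1) - G m k"
proof -
  consider (a) "k \<le> m" | (b) "k = m+1" | (c) "k = m+2" using assms by linarith
  then show ?thesis
  proof cases
    case a
    then obtain j where mj: "m = j + k" using le_iff_add by (metis add.commute)
    define b0 where "b0 = real ((j+k) choose k)"
    have e1: "real ((j+k+2) choose k) = b0*((real j+real k+1)*(real j+real k+2))/((real j+1)*(real j+2))"
      unfolding b0_def by (rule divide_helper[OF b1]) simp
    have e2: "real ((j+k+2) choose (k+1)) = b0*((real j+real k+1)*(real j+real k+2))/((real k+1)*(real j+1))"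
      unfolding b0_def by (rule divide_helper[OF b2]) simp
    have hF: "F m k = (-1)^k * b0 * Cr k * Cr j" unfolding F_def mj b0_def by simp
    have hX: "F (m+2) k = (-1)^k*b0*((real m+1)*(real m+2)/((real j+1)*(real j+2))) * Cr k * (Cr j*(4*(2*real j+1)*(2*real j+3)/((real j+2)*(real j+3))))"
    proof -
      have "F (m+2) k = (-1)^k * real ((j+k+2) choose k) * Cr k * Cr (j+2)"
        unfolding F_def mj by (simp add: add.commute add.left_commute)
      then show ?thesis unfolding e1 Cr_Suc2 mj by (simp add: algebra_simps)
    qed
    have hY: "F (m+2) (k+1) = -((-1)^k)*b0*((real m+1)*(real m+2)/((real k+1)*(real j+1))) * (Cr k*(2*(2*real k+1))/(real k+2)) * (Cr j*(2*(2*real j+1))/(real j+2))"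
    proof -
      have "F (m+2) (k+1) = (-1)^(k+1) * real ((j+k+2) choose (k+1)) * Cr (k+1) * Cr (j+1)"
        unfolding F_def mj by (simp add: add.commute add.left_commute)
      then show ?thesis unfolding e2 Cr_Suc mj by (simp add: algebra_simps)
    qed
    have hR0: "R m k = - real k*(real k+1)*PP (real m) (real k)/(4*(real m+1)*(real m+2)*(real m+3)*(2*real k-1)*(2*(real m+2-real k)-1))"
      unfolding R_def ..
    have hR1: "R m (k+1) = - (real k+1)*(real k+1+1)*PP (real m) (real k+1)/(4*(real m+1)*(real m+2)*(real m+3)*(2*(real k+1)-1)*(2*(real m+2-(real k+1))-1))"
      unfolding R_def by (simp add: ac_simps)
    have k1: "2*real k - 1 \<noteq> 0"
    proof
      assume "2*real k - 1 = 0"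
      then have "real (2*k) = 1" by simp
      then have "2*k = 1" by linarith
      then show False by presburger
    qed
    have "(real m+2)*(real m+4)*F (m+2) k - 16*(real m+1)^2*F m k = F (m+2) (k+1) * R m (k+1) - F (m+2) k * R m k"
      by (rule alg[OF _ _ k1 _ hX hF hY hR0 hR1]) (auto simp: mj)
    then show ?thesis unfolding G_def by simp
  next
    case b
    have X: "F (m+2) k = (-1)^(m+1)*(real m+2)*Cr (m+1)"
      unfolding F_def b using Cr1 by (simp add: numeral_2_eq_2)
    have Y: "F (m+2) (k+1) = -((-1)^(m+1))*(Cr (m+1)*(2*(2*real m+3))/(real m+3))"
    proof -
      have "F (m+2) (k+1) = (-1)^(m+2) * Cr (m+2)" unfolding F_def b by (simp add: Cr0)
      moreover have "Cr (m+2) = Cr (m+1)*(2*(2*real m+3))/(real m+3)"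
        using Cr_Suc[of "m+1"] by (simp add: algebra_simps)
      ultimately show ?thesis by simp
    qed
    have "G m (k+1) - G m k = F (m+2) (k+1) * R m (m+2) - F (m+2) k * R m (m+1)"
      unfolding G_def b by (simp add: numeral_2_eq_2)
    also have "\<dots> = (real m+2)*(real m+4)*F (m+2) k"
      unfolding X Y R_b1 R_b2 by (rule bnd_alg) auto
    finally show ?thesis using F_zero[of m k] b by simp
  next
    case c
    have "G m (k+1) = 0" unfolding G_def c by (simp add: F_zero)
    moreover have "G m k = F (m+2) k * (- (real m+2)*(real m+4))" unfolding G_def c R_b2 ..
    ultimately show ?thesis using F_zero[of m k] c by (simp add: algebra_simps)
  qed
qed

definition S :: "nat \<Rightarrow> real" where "S m = (\<Sum>k=0..m. F m k)"

lemma S_ext: "(\<Sum>k=0..m+2. F m k) = S m"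
  unfolding S_def by (rule sum.mono_neutral_right) (auto simp: F_zero)

lemma S_rec: "(real m+2)*(real m+4)*S (m+2) = 16*(real m+1)^2*S m"
proof -
  have "(\<Sum>k=0..m+2. (real m+2)*(real m+4)*F (m+2) k - 16*(real m+1)^2*F m k) = (\<Sum>k=0..m+2. G m (Suc k) - G m k)"
  proof (rule sum.cong[OF refl])
    fix x assume "x \<in> {0..m+2}"
    then have "x \<le> m+2" by simp
    from tele[OF this] show "(real m+2)*(real m+4)*F (m+2) x - 16*(real m+1)^2*F m x = G m (Suc x) - G m x" by simp
  qed
  also have "\<dots> = G m (Suc (m+2)) - G m 0" by (rule sum_Suc_diff) simp
  also have "\<dots> = 0" by (simp add: G_def R_def F_zero)
  finally have "(\<Sum>k=0..m+2. (real m+2)*(real m+4)*F (m+2) k - 16*(real m+1)^2*F m k) = 0" .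
  moreover have "(\<Sum>k=0..m+2. (real m+2)*(real m+4)*F (m+2) k - 16*(real m+1)^2*F m k) = (real m+2)*(real m+4)*(\<Sum>k=0..m+2. F (m+2) k) - 16*(real m+1)^2*S m"
    by (simp only: sum_subtractf sum_distrib_left[symmetric] S_ext)
  ultimately show ?thesis unfolding S_def[of "m+2"] by simp
qed

lemma S_even: "S (2*n) = Cr n * real ((2*n) choose n)"
proof (induction n)
  case 0
  then show ?case by (simp add: S_def F_def Cr0)
next
  case (Suc n)
  have r: "(real (2*n)+2)*(real (2*n)+4)*S (2*n+2) = 16*(real (2*n)+1)^2*S (2*n)" using S_rec[of "2*n"] .
  define N1 where "N1 = real n + 1"
  define N2 where "N2 = real n + 2"
  have nz: "N1 \<noteq> 0" "N2 \<noteq> 0" unfolding N1_def N2_def by auto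
  have r': "S (2*n+2) * (4*N1*N2) = 16*(2*real n+1)^2*S (2*n)"
    using r unfolding N1_def N2_def by (simp add: algebra_simps)
  have e: "S (2*n+2) = 16*(2*real n+1)^2*S (2*n)/(4*N1*N2)"
    by (rule divide_helper[OF r']) (use nz in simp)
  have c1: "Cr (n+1) = 2*(2*real n+1)*Cr n/N2" using Cr_Suc[of n] unfolding N2_def by simp
  have c2: "real (2*(n+1) choose (n+1)) = 2*(2*real n+1)*real (2*n choose n)/N1"
  proof -
    have "real ((n+1) * ((2*(n+1)) choose (n+1))) = real (2*(2*n+1) * ((2*n) choose n))"
      using central_nat[of n] by (simp only:)
    then have "real ((2*(n+1)) choose (n+1)) * N1 = 2*(2*real n+1) * real ((2*n) choose n)"
      unfolding N1_def by (simp only: of_nat_mult of_nat_add of_nat_1 of_nat_numeral mult.commute)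
    then show ?thesis by (rule divide_helper) (use nz in simp)
  qed
  have "S (2*Suc n) = S (2*n+2)" by simp
  also have "\<dots> = Cr (n+1) * real (2*(n+1) choose (n+1))"
    unfolding e c1 c2 Suc.IH using nz by (simp add: field_simps power2_eq_square)
  finally show ?case by simp
qed

lemma S_odd: "S (2*n+1) = 0"
proof (induction n)
  case 0
  then show ?case by (simp add: S_def F_def Cr0 Cr1)
next
  case (Suc n)
  have r: "(real (2*n+1)+2)*(real (2*n+1)+4)*S (2*n+1+2) = 16*(real (2*n+1)+1)^2*S (2*n+1)" using S_rec[of "2*n+1"] .
  then have "S (2*n+1+2) = 0" using Suc.IH by simp
  then show ?case by (simp add: add.commute add.left_commute)
qed

lemma S_int: "real_of_int (\<Sum>k=0..m. (-1::int)^k * int (m choose k) * int (catalan k) * int (catalan (m - k))) = S m"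
  by (simp add: S_def F_def Cr_def)

theorem mainTheorem6:
  fixes n :: nat
  shows "((\<Sum>k=0..2*n. (-1::int)^k * int ((2*n) choose k) * int (catalan k) * int (catalan (2*n - k)))
           = int (catalan n) * int ((2*n) choose n)) \<and>
         ((\<Sum>k=0..2*n+1. (-1::int)^k * int ((2*n+1) choose k) * int (catalan k) * int (catalan (2*n+1 - k))) = 0)"
proof
  have "real_of_int (\<Sum>k=0..2*n. (-1::int)^k * int ((2*n) choose k) * int (catalan k) * int (catalan (2*n - k)))
      = real_of_int (int (catalan n) * int ((2*n) choose n))"
    unfolding S_int S_even by (simp add: Cr_def)
  then show "(\<Sum>k=0..2*n. (-1::int)^k * int ((2*n) choose k) * int (catalan k) * int (catalan (2*n - k)))
           = int (catalan n) * int ((2*n) choose n)" by (simp only: of_int_eq_iff)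
next
  have "real_of_int (\<Sum>k=0..2*n+1. (-1::int)^k * int ((2*n+1) choose k) * int (catalan k) * int (catalan (2*n+1 - k))) = real_of_int 0"
    unfolding S_int S_odd by simp
  then show "(\<Sum>k=0..2*n+1. (-1::int)^k * int ((2*n+1) choose k) * int (catalan k) * int (catalan (2*n+1 - k))) = 0"
    by (simp only: of_int_eq_iff)
qed

end
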